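(* Let $\tau:\mathcal{X}\to\mathcal{X}$ be a continuous map on a compact metric space $(\mathcal{X},d)$ and let $x_*\in\mathcal{X}$. Then $\tau$ is mixing with fixed point $x_*$ (i.e. $\lim_{n\to\infty}\tau^n(x)=x_*$ for all $x\in\mathcal{X}$) if and only if there exists a generalised Lyapunov function for $\tau$ around $x_*$.
   Context: $\tau^n$ is the $n$-fold composition of $\tau$. A continuous map $S:\mathcal{X}\to\mathbb{R}$ is a generalised Lyapunov function for $\tau$ around $x_*\in\mathcal{X}$ if for every $x\in\mathcal{X}$ the sequence $S(\tau^n(x))$ converges, and $\lim_{n\to\infty}S(\tau^n(x))\neq S(x)$ for all $x\neq x_*$. *)

theory Defs
  imports "HOL-Analysis.Analysis"
begin

definition gen_lyapunov ::
  "'a::metric_space set \<Rightarrow> ('a \<Rightarrow> 'a) \<Rightarrow> 'a \<Rightarrow> ('a \<Rightarrow> real) \<Rightarrow> bool" where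
  "gen_lyapunov X \<tau> xs S \<longleftrightarrow>
     continuous_on X S \<and>
     (\<forall>x\<in>X. convergent (\<lambda>n. S ((\<tau> ^^ n) x))) \<and>
     (\<forall>x\<in>X. x \<noteq> xs \<longrightarrow> lim (\<lambda>n. S ((\<tau> ^^ n) x)) \<noteq> S x)"

end

theory Submission
  imports Defs
begin

lemma iter_in: "\<tau> ` X \<subseteq> X \<Longrightarrow> x \<in> X \<Longrightarrow> (\<tau> ^^ n) x \<in> X"
  by (induction n) auto

lemma cont_iter:
  assumes "\<tau> ` X \<subseteq> X" "continuous_on X \<tau>"
  shows "continuous_on X (\<tau> ^^ n)"
proof (induction n)
  case 0 then show ?case by (simp add: continuous_on_id)
next
  case (Suc n)
  have "(\<tau> ^^ n) ` X \<subseteq> X" using iter_in[OF assms(1)] by auto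
  then have "continuous_on ((\<tau> ^^ n) ` X) \<tau>" using assms(2) continuous_on_subset by blast
  then show ?case using continuous_on_compose[OF Suc] by simp
qed

theorem mainTheorem7:
  fixes X :: "'a::metric_space set" and \<tau> :: "'a \<Rightarrow> 'a" and xs :: 'a
  assumes "compact X"
    and "\<tau> ` X \<subseteq> X"
    and "continuous_on X \<tau>"
    and "xs \<in> X"
  shows "(\<forall>x\<in>X. (\<lambda>n. (\<tau> ^^ n) x) \<longlonglongrightarrow> xs) \<longleftrightarrow> (\<exists>S. gen_lyapunov X \<tau> xs S)"
proof
  assume H: "\<forall>x\<in>X. (\<lambda>n. (\<tau> ^^ n) x) \<longlonglongrightarrow> xs"
  define S where "S = (\<lambda>y. dist y xs)"
  have lim0: "(\<lambda>n. S ((\<tau> ^^ n) x)) \<longlonglongrightarrow> 0" if "x \<in> X" for x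
    unfolding S_def using H that by (simp add: tendsto_dist_iff[symmetric])
  have "gen_lyapunov X \<tau> xs S"
    unfolding gen_lyapunov_def
  proof (intro conjI ballI impI)
    show "continuous_on X S" unfolding S_def by (intro continuous_intros)
    fix x assume "x \<in> X"
    then show "convergent (\<lambda>n. S ((\<tau> ^^ n) x))" using lim0 convergent_def by blast
    assume "x \<noteq> xs"
    then show "lim (\<lambda>n. S ((\<tau> ^^ n) x)) \<noteq> S x"
    proof -
      have "lim (\<lambda>n. S ((\<tau> ^^ n) x)) = 0" using lim0[OF \<open>x \<in> X\<close>] by (rule limI)
      then show ?thesis using \<open>x \<noteq> xs\<close> unfolding S_def by simp
    qed
  qed
  then show "\<exists>S. gen_lyapunov X \<tau> xs S" by blast
next
  assume "\<exists>S. gen_lyapunov X \<tau> xs S"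
  then obtain S where G: "gen_lyapunov X \<tau> xs S" by blast
  have cS: "continuous_on X S"
    and conv: "\<And>x. x \<in> X \<Longrightarrow> convergent (\<lambda>n. S ((\<tau> ^^ n) x))"
    and ne: "\<And>x. x \<in> X \<Longrightarrow> x \<noteq> xs \<Longrightarrow> lim (\<lambda>n. S ((\<tau> ^^ n) x)) \<noteq> S x"
    using G unfolding gen_lyapunov_def by auto
  have sc: "seq_compact X" using assms(1) compact_imp_seq_compact by blast
  show "\<forall>x\<in>X. (\<lambda>n. (\<tau> ^^ n) x) \<longlonglongrightarrow> xs"
  proof (intro ballI, rule ccontr)
    fix x assume xX: "x \<in> X" and nc: "\<not> (\<lambda>n. (\<tau> ^^ n) x) \<longlonglongrightarrow> xs"
    define L where "L = lim (\<lambda>n. S ((\<tau> ^^ n) x))"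
    have LL: "(\<lambda>n. S ((\<tau> ^^ n) x)) \<longlonglongrightarrow> L"
      using conv[OF xX] unfolding L_def by (simp add: convergent_LIMSEQ_iff)
    obtain e where e: "e > 0" "\<forall>N. \<exists>n\<ge>N. dist ((\<tau> ^^ n) x) xs \<ge> e"
      using nc unfolding lim_sequentially not_all not_ex not_imp not_less by blast
    have "infinite {n. dist ((\<tau> ^^ n) x) xs \<ge> e}"
      unfolding infinite_nat_iff_unbounded_le using e(2) by blast
    then obtain r :: "nat \<Rightarrow> nat" where r: "strict_mono r" "\<forall>n. dist ((\<tau> ^^ r n) x) xs \<ge> e"
      using infinite_enumerate by blast
    obtain y r2 where y: "y \<in> X" "strict_mono r2" "((\<lambda>n. (\<tau> ^^ r n) x) \<circ> r2) \<longlonglongrightarrow> y"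
      using seq_compactE[OF sc, of "\<lambda>n. (\<tau> ^^ r n) x"] iter_in[OF assms(2) xX] by blast
    define q where "q = r \<circ> r2"
    have q: "strict_mono q" unfolding q_def using r(1) y(2) strict_mono_o by blast
    have yq: "(\<lambda>k. (\<tau> ^^ q k) x) \<longlonglongrightarrow> y" using y(3) unfolding q_def comp_def .
    have "dist y xs \<ge> e"
    proof (rule tendsto_lowerbound[OF _ _ trivial_limit_sequentially])
      show "((\<lambda>k. dist ((\<tau> ^^ q k) x) xs) \<longlongrightarrow> dist y xs) sequentially"
        using yq by (intro tendsto_intros)
      show "\<forall>\<^sub>F k in sequentially. e \<le> dist ((\<tau> ^^ q k) x) xs"
        using r(2) unfolding q_def by simp
    qed
    then have yne: "y \<noteq> xs" using e(1) by auto
    have key: "S ((\<tau> ^^ m) y) = L" for m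
    proof -
      have c1: "(\<lambda>k. (\<tau> ^^ m) ((\<tau> ^^ q k) x)) \<longlonglongrightarrow> (\<tau> ^^ m) y"
        by (rule continuous_on_tendsto_compose[OF cont_iter[OF assms(2,3)] yq y(1)])
           (simp add: iter_in[OF assms(2) xX])
      have c2: "(\<lambda>k. S ((\<tau> ^^ m) ((\<tau> ^^ q k) x))) \<longlonglongrightarrow> S ((\<tau> ^^ m) y)"
        by (rule continuous_on_tendsto_compose[OF cS c1 iter_in[OF assms(2) y(1)]])
           (simp add: iter_in[OF assms(2) iter_in[OF assms(2) xX]])
      have sm: "strict_mono (\<lambda>k. m + q k)" using q by (simp add: strict_mono_def)
      have "((\<lambda>n. S ((\<tau> ^^ n) x)) \<circ> (\<lambda>k. m + q k)) \<longlonglongrightarrow> L"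
        by (rule LIMSEQ_subseq_LIMSEQ[OF LL sm])
      then have "(\<lambda>k. S ((\<tau> ^^ m) ((\<tau> ^^ q k) x))) \<longlonglongrightarrow> L"
        by (simp add: comp_def funpow_add)
      then show ?thesis using c2 LIMSEQ_unique by blast
    qed
    have "lim (\<lambda>n. S ((\<tau> ^^ n) y)) = L" using key by (simp add: limI)
    moreover have "S y = L" using key[of 0] by simp
    ultimately show False using ne[OF y(1) yne] by simp
  qed
qed

end
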